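(* Let $(X_i)_{i\in\mathbb{Z}}$ be a sequence (not necessarily stationary) of square-integrable random variables adapted to a nondecreasing filtration $(\mathcal{F}_i)_{i\in\mathbb{Z}}$. For $n\ge 1$ let $S_n=\sum_{k=1}^n X_k$ and $M_n=\max_{1\le i\le n}|S_i|$. Then for every $n\ge1$, $$\mathbb{E}(M_n)^2 \le 4\sum_{k=1}^n \mathbb{E}(X_k^2) + 12\sum_{k=1}^{n-1}\big\|X_k\,\mathbb{E}(S_n-S_k\mid\mathcal{F}_k)\big\|_1 .$$
   Context: $\|\cdot\|_1$ denotes the $\mathbb{L}_1$ norm, $\|Y\|_1=\mathbb{E}|Y|$. *)

theory Defs
  imports "HOL-Probability.Probability"
begin

end

theory Submission
  imports Defs
begin

lemma split_sum_R:
  fixes x :: "nat \<Rightarrow> real"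
  assumes "k \<le> n"
  shows "(\<Sum>j=1..n. x j) = (\<Sum>j=1..k. x j) + (\<Sum>j=k+1..n. x j)"
  using assms
proof (induction n)
  case 0 then show ?case by simp
next
  case (Suc n)
  show ?case
  proof (cases "k = Suc n")
    case True then show ?thesis by simp
  next
    case False
    then have "k \<le> n" using Suc.prems by simp
    then show ?thesis using Suc.IH by (simp add: sum.cl_ivl_Suc)
  qed
qed

lemma square_sum_R:
  fixes x :: "nat \<Rightarrow> real"
  shows "(\<Sum>j=1..n. x j)^2 = (\<Sum>k=1..n. (x k)^2) + 2 * (\<Sum>k=1..n. x k * (\<Sum>j=k+1..n. x j))"
proof (induction n)
  case 0 then show ?case by simp
next
  case (Suc n)
  have "(\<Sum>k=1..n. x k * (\<Sum>j=k+1..Suc n. x j)) = (\<Sum>k=1..n. x k * (\<Sum>j=k+1..n. x j) + x k * x (Suc n))"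
    by (rule sum.cong) (auto simp: sum.cl_ivl_Suc algebra_simps)
  also have "\<dots> = (\<Sum>k=1..n. x k * (\<Sum>j=k+1..n. x j)) + (\<Sum>k=1..n. x k) * x (Suc n)"
    by (simp add: sum.distrib sum_distrib_right)
  finally have h: "(\<Sum>k=1..n. x k * (\<Sum>j=k+1..Suc n. x j)) = (\<Sum>k=1..n. x k * (\<Sum>j=k+1..n. x j)) + (\<Sum>k=1..n. x k) * x (Suc n)" .
  show ?case using Suc.IH h by (simp add: sum.cl_ivl_Suc power2_eq_square algebra_simps)
qed

lemma Max_insert0:
  fixes A :: "real set"
  assumes "finite A" "A \<noteq> {}" "\<And>a. a \<in> A \<Longrightarrow> 0 \<le> a"
  shows "Max (insert 0 A) = Max A"
proof -
  have "0 \<le> Max A" using assms Max_in by blast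
  then show ?thesis using assms by (simp add: max_def)
qed

lemma m_Suc:
  fixes s :: "nat \<Rightarrow> real"
  shows "Max (insert 0 ((\<lambda>j. \<bar>s j\<bar>) ` {1..Suc i})) = max \<bar>s (Suc i)\<bar> (Max (insert 0 ((\<lambda>j. \<bar>s j\<bar>) ` {1..i})))"
proof -
  have e: "{1..Suc i} = insert (Suc i) {1..i}" by auto
  let ?A = "(\<lambda>j. \<bar>s j\<bar>) ` {1..i}"
  have "Max (insert 0 (insert \<bar>s (Suc i)\<bar> ?A)) = Max (insert \<bar>s (Suc i)\<bar> (insert 0 ?A))"
    by (metis insert_commute)
  also have "\<dots> = max \<bar>s (Suc i)\<bar> (Max (insert 0 ?A))" by (rule Max_insert) auto
  finally show ?thesis using e by simp
qed

lemma m_ge: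
  fixes s :: "nat \<Rightarrow> real"
  shows "\<bar>s i\<bar> \<le> Max (insert 0 ((\<lambda>j. \<bar>s j\<bar>) ` {1..i})) \<or> i = 0"
proof (cases "i = 0")
  case False
  then have "\<bar>s i\<bar> \<in> insert 0 ((\<lambda>j. \<bar>s j\<bar>) ` {1..i})" by auto
  then show ?thesis by (intro disjI1 Max_ge) auto
qed simp

lemma path:
  fixes x :: "nat \<Rightarrow> real" and n :: nat
  defines "s \<equiv> \<lambda>i. \<Sum>k=1..i. x k"
  defines "m \<equiv> \<lambda>i. Max (insert 0 ((\<lambda>j. \<bar>s j\<bar>) ` {1..i}))"
  assumes "n \<ge> 1"
  shows "(Max ((\<lambda>i. \<bar>\<Sum>k=1..i. x k\<bar>) ` {1..n}))^2 \<le> 4 * (\<Sum>k=1..n. (x k)^2)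
     + (\<Sum>k=1..n-1. (8 * x k - 4 * (sgn (s k) * (m k - m (k-1)))) * (\<Sum>j=k+1..n. x j))"
    and "\<And>k. k \<ge> 1 \<Longrightarrow> \<bar>sgn (s k) * (m k - m (k-1))\<bar> \<le> \<bar>x k\<bar>"
proof -
  have m0: "m 0 = 0" by (simp add: m_def)
  have mS: "\<And>i. m (Suc i) = max \<bar>s (Suc i)\<bar> (m i)" unfolding m_def by (rule m_Suc)
  have mnn: "\<And>i. 0 \<le> m i" unfolding m_def by (simp add: Max_ge_iff)
  have mge: "\<And>i. \<bar>s i\<bar> \<le> m i"
  proof -
    fix i show "\<bar>s i\<bar> \<le> m i" using m_ge[of s i] by (auto simp: m_def s_def)
  qed
  have sS: "\<And>i. s (Suc i) = s i + x (Suc i)" by (simp add: s_def)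
  have dle: "\<And>i. m (Suc i) - m i \<le> \<bar>x (Suc i)\<bar>"
  proof -
    fix i
    have "\<bar>s (Suc i)\<bar> - m i \<le> \<bar>x (Suc i)\<bar>" using mge[of i] sS[of i] by linarith
    then show "m (Suc i) - m i \<le> \<bar>x (Suc i)\<bar>" using mS[of i] by (simp add: max_def)
  qed
  have dnn: "\<And>i. 0 \<le> m (Suc i) - m i" using mS by simp
  show bnd: "\<And>k. k \<ge> 1 \<Longrightarrow> \<bar>sgn (s k) * (m k - m (k-1))\<bar> \<le> \<bar>x k\<bar>"
  proof -
    fix k :: nat assume "k \<ge> 1"
    then obtain i where k: "k = Suc i" by (cases k) auto
    have "\<bar>sgn (s k) * (m k - m (k-1))\<bar> \<le> \<bar>m k - m (k-1)\<bar>"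
      by (simp add: abs_mult abs_sgn_eq)
    also have "\<dots> \<le> \<bar>x k\<bar>" using dle[of i] dnn[of i] k by simp
    finally show "\<bar>sgn (s k) * (m k - m (k-1))\<bar> \<le> \<bar>x k\<bar>" .
  qed
  define R where "R = (\<lambda>k. \<Sum>j=k+1..n. x j)"
  define e where "e = (\<lambda>k. sgn (s k) * (m k - m (k-1)))"
  have P1: "\<And>N. (m N)^2 \<le> 2 * (\<Sum>k=1..N. \<bar>s k\<bar> * (m k - m (k-1)))"
  proof -
    fix N show "(m N)^2 \<le> 2 * (\<Sum>k=1..N. \<bar>s k\<bar> * (m k - m (k-1)))"
    proof (induction N)
      case 0 then show ?case by (simp add: m0)
    next
      case (Suc N)
      have "(m (Suc N))^2 - (m N)^2 \<le> 2 * (\<bar>s (Suc N)\<bar> * (m (Suc N) - m N))"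
      proof (cases "\<bar>s (Suc N)\<bar> \<le> m N")
        case True then show ?thesis using mS[of N] by (simp add: max_def)
      next
        case False
        then have "m (Suc N) = \<bar>s (Suc N)\<bar>" using mS[of N] by simp
        have key: "\<And>a b::real. a^2 - b^2 = 2*(a*(a-b)) - (a-b)^2"
          by (simp add: power2_eq_square algebra_simps)
        show ?thesis unfolding \<open>m (Suc N) = \<bar>s (Suc N)\<bar>\<close>
          using key[of "\<bar>s (Suc N)\<bar>" "m N"] zero_le_power2[of "\<bar>s (Suc N)\<bar> - m N"] by linarith
      qed
      then show ?case using Suc.IH by (simp add: sum.cl_ivl_Suc)
    qed
  qed
  have tele: "\<And>N. (\<Sum>k=1..N. (m k - m (k-1))) = m N"
  proof -
    fix N show "(\<Sum>k=1..N. (m k - m (k-1))) = m N"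
      by (induction N) (simp_all add: m0 sum.cl_ivl_Suc)
  qed
  have sk: "\<And>k. k \<in> {1..n} \<Longrightarrow> s k = s n - R k"
    using split_sum_R[of _ n x] by (auto simp: s_def R_def)
  have "(\<Sum>k=1..n. \<bar>s k\<bar> * (m k - m (k-1))) = (\<Sum>k=1..n. sgn (s k) * (m k - m (k-1)) * s k)"
    by (rule sum.cong) (auto simp: abs_sgn mult.commute)
  also have "\<dots> = (\<Sum>k=1..n. e k * (s n - R k))"
  proof (rule sum.cong[OF refl])
    fix k assume "k \<in> {1..n}"
    then have "s k = s n - R k" by (rule sk)
    then show "sgn (s k) * (m k - m (k-1)) * s k = e k * (s n - R k)" by (simp add: e_def)
  qed
  also have "\<dots> = s n * (\<Sum>k=1..n. e k) - (\<Sum>k=1..n. e k * R k)"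
    by (simp add: algebra_simps sum_subtractf sum_distrib_left)
  finally have A: "(\<Sum>k=1..n. \<bar>s k\<bar> * (m k - m (k-1))) = s n * (\<Sum>k=1..n. e k) - (\<Sum>k=1..n. e k * R k)" .
  have "\<bar>\<Sum>k=1..n. e k\<bar> \<le> (\<Sum>k=1..n. \<bar>e k\<bar>)" by (rule sum_abs)
  also have "\<dots> \<le> (\<Sum>k=1..n. (m k - m (k-1)))"
  proof (rule sum_mono)
    fix k assume "k \<in> {1..n}"
    then obtain i where k: "k = Suc i" by (cases k) auto
    show "\<bar>e k\<bar> \<le> m k - m (k-1)" using dnn[of i] k
      by (simp add: e_def abs_mult abs_sgn_eq)
  qed
  also have "\<dots> = m n" by (rule tele)
  finally have B: "\<bar>\<Sum>k=1..n. e k\<bar> \<le> m n" .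
  have C: "s n * (\<Sum>k=1..n. e k) \<le> \<bar>s n\<bar> * m n"
  proof -
    have "s n * (\<Sum>k=1..n. e k) \<le> \<bar>s n\<bar> * \<bar>\<Sum>k=1..n. e k\<bar>"
      by (metis abs_ge_self abs_mult)
    also have "\<dots> \<le> \<bar>s n\<bar> * m n" using B by (simp add: mult_left_mono)
    finally show ?thesis .
  qed
  have D: "2 * (\<bar>s n\<bar> * m n) \<le> (m n)^2 / 2 + 2 * (s n)^2"
  proof -
    have "0 \<le> (m n / 2 - \<bar>s n\<bar>)^2" by simp
    then show ?thesis by (simp add: power2_eq_square algebra_simps)
  qed
  have E: "(m n)^2 \<le> 4 * (s n)^2 - 4 * (\<Sum>k=1..n. e k * R k)"
    using P1[of n] A C D by linarith
  have F: "(s n)^2 = (\<Sum>k=1..n. (x k)^2) + 2 * (\<Sum>k=1..n. x k * R k)"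
    unfolding s_def R_def by (rule square_sum_R)
  have G: "(m n)^2 \<le> 4 * (\<Sum>k=1..n. (x k)^2) + (\<Sum>k=1..n. (8 * x k - 4 * e k) * R k)"
    using E F by (simp add: algebra_simps sum_subtractf sum_distrib_left)
  have Rn: "R n = 0" by (simp add: R_def)
  obtain n' where n': "n = Suc n'" using assms(3) by (cases n) auto
  have H: "(\<Sum>k=1..n. (8 * x k - 4 * e k) * R k) = (\<Sum>k=1..n-1. (8 * x k - 4 * e k) * R k)"
    using Rn n' by (simp add: sum.cl_ivl_Suc)
  have Mx: "Max ((\<lambda>i. \<bar>\<Sum>k=1..i. x k\<bar>) ` {1..n}) = m n"
    unfolding m_def s_def using assms(3) by (subst Max_insert0) auto
  show "(Max ((\<lambda>i. \<bar>\<Sum>k=1..i. x k\<bar>) ` {1..n}))^2 \<le> 4 * (\<Sum>k=1..n. (x k)^2)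
     + (\<Sum>k=1..n-1. (8 * x k - 4 * (sgn (s k) * (m k - m (k-1)))) * (\<Sum>j=k+1..n. x j))"
    using G H Mx by (simp add: e_def R_def)
qed


theorem corollary6:
  fixes M :: "'a measure" and F :: "int \<Rightarrow> 'a measure"
    and X :: "int \<Rightarrow> 'a \<Rightarrow> real" and n :: nat
  assumes "prob_space M"
    and "\<And>i. subalgebra M (F i)"
    and "\<And>i j. i \<le> j \<Longrightarrow> sets (F i) \<subseteq> sets (F j)"
    and "\<And>i. X i \<in> borel_measurable (F i)"
    and "\<And>i. integrable M (\<lambda>x. (X i x)\<^sup>2)"
    and "n \<ge> 1"
  shows "(\<integral>x. (Max ((\<lambda>i. \<bar>\<Sum>k=1..i. X (int k) x\<bar>) ` {1..n}))\<^sup>2 \<partial>M)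
         \<le> 4 * (\<Sum>k=1..n. \<integral>x. (X (int k) x)\<^sup>2 \<partial>M)
           + 12 * (\<Sum>k=1..n-1. \<integral>x. \<bar>X (int k) x *
                 real_cond_exp M (F (int k)) (\<lambda>y. \<Sum>j=k+1..n. X (int j) y) x\<bar> \<partial>M)"
proof -
  interpret P: prob_space M by fact
  have measM: "\<And>i. X i \<in> borel_measurable M"
    using measurable_from_subalg[OF assms(2) assms(4)] by blast
  have meas_mono: "\<And>j k. j \<le> k \<Longrightarrow> X (int j) \<in> borel_measurable (F (int k))"
  proof -
    fix j k :: nat assume "j \<le> k"
    have "subalgebra (F (int k)) (F (int j))"
      using assms(3)[of "int j" "int k"] \<open>j \<le> k\<close> assms(2)[of "int j"] assms(2)[of "int k"]
      unfolding subalgebra_def by auto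
    then show "X (int j) \<in> borel_measurable (F (int k))"
      using measurable_from_subalg assms(4) by blast
  qed
  have intprod: "\<And>i j. integrable M (\<lambda>\<omega>. X i \<omega> * X j \<omega>)"
  proof -
    fix i j
    show "integrable M (\<lambda>\<omega>. X i \<omega> * X j \<omega>)"
    proof (rule Bochner_Integration.integrable_bound[of _ "\<lambda>\<omega>. (X i \<omega>)\<^sup>2 + (X j \<omega>)\<^sup>2"])
      show "integrable M (\<lambda>\<omega>. (X i \<omega>)\<^sup>2 + (X j \<omega>)\<^sup>2)" using assms(5) by auto
      show "(\<lambda>\<omega>. X i \<omega> * X j \<omega>) \<in> borel_measurable M" using measM by auto
      show "AE \<omega> in M. norm (X i \<omega> * X j \<omega>) \<le> norm ((X i \<omega>)\<^sup>2 + (X j \<omega>)\<^sup>2)"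
      proof (rule AE_I2)
        fix \<omega>
        have "0 \<le> (\<bar>X i \<omega>\<bar> - \<bar>X j \<omega>\<bar>)\<^sup>2" by simp
        then have h: "2 * (\<bar>X i \<omega>\<bar> * \<bar>X j \<omega>\<bar>) \<le> (X i \<omega>)\<^sup>2 + (X j \<omega>)\<^sup>2"
          by (simp add: power2_eq_square algebra_simps)
        have "0 \<le> \<bar>X i \<omega>\<bar> * \<bar>X j \<omega>\<bar>" by simp
        then have "\<bar>X i \<omega>\<bar> * \<bar>X j \<omega>\<bar> \<le> (X i \<omega>)\<^sup>2 + (X j \<omega>)\<^sup>2"
          using h by linarith
        then show "norm (X i \<omega> * X j \<omega>) \<le> norm ((X i \<omega>)\<^sup>2 + (X j \<omega>)\<^sup>2)"
          by (simp add: abs_mult)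
      qed
    qed
  qed
  define s where "s = (\<lambda>\<omega> i. \<Sum>k=1..i. X (int k) \<omega>)"
  define m where "m = (\<lambda>\<omega> i. Max (insert 0 ((\<lambda>j. \<bar>s \<omega> j\<bar>) ` {1..i})))"
  define R where "R = (\<lambda>k \<omega>. \<Sum>j=k+1..n. X (int j) \<omega>)"
  define Y where "Y = (\<lambda>k \<omega>. 8 * X (int k) \<omega> - 4 * (sgn (s \<omega> k) * (m \<omega> k - m \<omega> (k-1))))"
  have pw: "\<And>\<omega>. (Max ((\<lambda>i. \<bar>\<Sum>k=1..i. X (int k) \<omega>\<bar>) ` {1..n}))\<^sup>2
      \<le> 4 * (\<Sum>k=1..n. (X (int k) \<omega>)\<^sup>2) + (\<Sum>k=1..n-1. Y k \<omega> * R k \<omega>)"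
  proof -
    fix \<omega>
    show "?thesis \<omega>"
      using path(1)[where n=n and x="\<lambda>k. X (int k) \<omega>"] assms(6) unfolding Y_def R_def s_def m_def by simp
  qed
  have Ybound: "\<And>k \<omega>. k \<ge> 1 \<Longrightarrow> \<bar>Y k \<omega>\<bar> \<le> 12 * \<bar>X (int k) \<omega>\<bar>"
  proof -
    fix k :: nat and \<omega> assume "k \<ge> 1"
    have "\<bar>sgn (s \<omega> k) * (m \<omega> k - m \<omega> (k-1))\<bar> \<le> \<bar>X (int k) \<omega>\<bar>"
      using path(2)[where n=n and x="\<lambda>k. X (int k) \<omega>" and k=k] assms(6) \<open>k \<ge> 1\<close> unfolding s_def m_def by simp
    then show "\<bar>Y k \<omega>\<bar> \<le> 12 * \<bar>X (int k) \<omega>\<bar>" unfolding Y_def by linarith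
  qed
  have sF: "\<And>i k. i \<le> k \<Longrightarrow> (\<lambda>\<omega>. s \<omega> i) \<in> borel_measurable (F (int k))"
    unfolding s_def by (intro borel_measurable_sum meas_mono) auto
  have mF: "\<And>i k. i \<le> k \<Longrightarrow> (\<lambda>\<omega>. m \<omega> i) \<in> borel_measurable (F (int k))"
  proof -
    fix i k :: nat assume "i \<le> k"
    then show "(\<lambda>\<omega>. m \<omega> i) \<in> borel_measurable (F (int k))"
    proof (induction i)
      case 0 then show ?case by (simp add: m_def)
    next
      case (Suc i)
      have eq: "(\<lambda>\<omega>. m \<omega> (Suc i)) = (\<lambda>\<omega>. max \<bar>s \<omega> (Suc i)\<bar> (m \<omega> i))"
        unfolding m_def by (rule ext, rule m_Suc)
      have [measurable]: "(\<lambda>\<omega>. m \<omega> i) \<in> borel_measurable (F (int k))"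
        using Suc.IH Suc.prems by simp
      have [measurable]: "(\<lambda>\<omega>. s \<omega> (Suc i)) \<in> borel_measurable (F (int k))"
        using sF Suc.prems by simp
      show ?case unfolding eq by measurable
    qed
  qed
  have YF: "\<And>k. Y k \<in> borel_measurable (F (int k))"
  proof -
    fix k
    have [measurable]: "(\<lambda>\<omega>. s \<omega> k) \<in> borel_measurable (F (int k))" "(\<lambda>\<omega>. m \<omega> k) \<in> borel_measurable (F (int k))"
      "(\<lambda>\<omega>. m \<omega> (k-1)) \<in> borel_measurable (F (int k))" "X (int k) \<in> borel_measurable (F (int k))"
      using sF mF assms(4) by auto
    show "Y k \<in> borel_measurable (F (int k))" unfolding Y_def by measurable
  qed
  have YM: "\<And>k. Y k \<in> borel_measurable M" using measurable_from_subalg[OF assms(2) YF] by blast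
  have RM: "\<And>k. R k \<in> borel_measurable M" unfolding R_def using measM by auto
  have intXR: "\<And>k. integrable M (\<lambda>\<omega>. X (int k) \<omega> * R k \<omega>)"
    unfolding R_def sum_distrib_left using intprod by auto
  have intYR: "\<And>k. k \<ge> 1 \<Longrightarrow> integrable M (\<lambda>\<omega>. Y k \<omega> * R k \<omega>)"
  proof -
    fix k :: nat assume k: "k \<ge> 1"
    show "integrable M (\<lambda>\<omega>. Y k \<omega> * R k \<omega>)"
    proof (rule Bochner_Integration.integrable_bound[of _ "\<lambda>\<omega>. 12 * (X (int k) \<omega> * R k \<omega>)"])
      show "integrable M (\<lambda>\<omega>. 12 * (X (int k) \<omega> * R k \<omega>))" using intXR by auto
      show "(\<lambda>\<omega>. Y k \<omega> * R k \<omega>) \<in> borel_measurable M" using YM RM by auto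
      show "AE \<omega> in M. norm (Y k \<omega> * R k \<omega>) \<le> norm (12 * (X (int k) \<omega> * R k \<omega>))"
      proof (rule AE_I2)
        fix \<omega>
        have "\<bar>Y k \<omega>\<bar> * \<bar>R k \<omega>\<bar> \<le> 12 * \<bar>X (int k) \<omega>\<bar> * \<bar>R k \<omega>\<bar>"
          using Ybound[OF k] by (simp add: mult_right_mono)
        then show "norm (Y k \<omega> * R k \<omega>) \<le> norm (12 * (X (int k) \<omega> * R k \<omega>))"
          by (simp add: abs_mult)
      qed
    qed
  qed
  have perk: "\<And>k. k \<in> {1..n-1} \<Longrightarrow> (\<integral>\<omega>. Y k \<omega> * R k \<omega> \<partial>M)
      \<le> 12 * (\<integral>\<omega>. \<bar>X (int k) \<omega> * real_cond_exp M (F (int k)) (R k) \<omega>\<bar> \<partial>M)"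
  proof -
    fix k :: nat assume k: "k \<in> {1..n-1}"
    then have k1: "k \<ge> 1" by simp
    interpret S: sigma_finite_subalgebra M "F (int k)"
      using finite_measure_subalgebra_is_sigma_finite[of M "F (int k)"] P.finite_measure_axioms assms(2)
      unfolding finite_measure_subalgebra_def finite_measure_subalgebra_axioms_def by blast
    let ?C = "real_cond_exp M (F (int k)) (R k)"
    have i1: "integrable M (\<lambda>\<omega>. Y k \<omega> * ?C \<omega>)" and e1: "(\<integral>\<omega>. Y k \<omega> * ?C \<omega> \<partial>M) = (\<integral>\<omega>. Y k \<omega> * R k \<omega> \<partial>M)"
      using S.real_cond_exp_intg[OF intYR[OF k1] YF RM] by auto
    have i2: "integrable M (\<lambda>\<omega>. X (int k) \<omega> * ?C \<omega>)"
      using S.real_cond_exp_intg(1)[OF intXR assms(4) RM] by auto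
    have "(\<integral>\<omega>. Y k \<omega> * R k \<omega> \<partial>M) = (\<integral>\<omega>. Y k \<omega> * ?C \<omega> \<partial>M)" using e1 by simp
    also have "\<dots> \<le> (\<integral>\<omega>. 12 * \<bar>X (int k) \<omega> * ?C \<omega>\<bar> \<partial>M)"
    proof (rule integral_mono)
      show "integrable M (\<lambda>\<omega>. Y k \<omega> * ?C \<omega>)" by (rule i1)
      show "integrable M (\<lambda>\<omega>. 12 * \<bar>X (int k) \<omega> * ?C \<omega>\<bar>)" using i2 by auto
      fix \<omega>
      have "Y k \<omega> * ?C \<omega> \<le> \<bar>Y k \<omega>\<bar> * \<bar>?C \<omega>\<bar>" by (metis abs_ge_self abs_mult)
      also have "\<dots> \<le> 12 * \<bar>X (int k) \<omega>\<bar> * \<bar>?C \<omega>\<bar>" using Ybound[OF k1] by (simp add: mult_right_mono)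
      finally show "Y k \<omega> * ?C \<omega> \<le> 12 * \<bar>X (int k) \<omega> * ?C \<omega>\<bar>" by (simp add: abs_mult)
    qed
    also have "\<dots> = 12 * (\<integral>\<omega>. \<bar>X (int k) \<omega> * ?C \<omega>\<bar> \<partial>M)" by simp
    finally show "?thesis k" .
  qed
  have mM: "(\<lambda>\<omega>. m \<omega> n) \<in> borel_measurable M" using measurable_from_subalg[OF assms(2) mF[of n n]] by blast
  have Lm: "\<And>\<omega>. Max ((\<lambda>i. \<bar>\<Sum>k=1..i. X (int k) \<omega>\<bar>) ` {1..n}) = m \<omega> n"
    unfolding m_def s_def using assms(6) by (subst Max_insert0) auto
  let ?G = "\<lambda>\<omega>. 4 * (\<Sum>k=1..n. (X (int k) \<omega>)\<^sup>2) + (\<Sum>k=1..n-1. Y k \<omega> * R k \<omega>)"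
  have iG1: "integrable M (\<lambda>\<omega>. 4 * (\<Sum>k=1..n. (X (int k) \<omega>)\<^sup>2))" using assms(5) by auto
  have iG2: "integrable M (\<lambda>\<omega>. \<Sum>k=1..n-1. Y k \<omega> * R k \<omega>)" using intYR by auto
  have iG: "integrable M ?G" using iG1 iG2 by auto
  have iL: "integrable M (\<lambda>\<omega>. (Max ((\<lambda>i. \<bar>\<Sum>k=1..i. X (int k) \<omega>\<bar>) ` {1..n}))\<^sup>2)"
  proof (rule Bochner_Integration.integrable_bound[OF iG])
    show "(\<lambda>\<omega>. (Max ((\<lambda>i. \<bar>\<Sum>k=1..i. X (int k) \<omega>\<bar>) ` {1..n}))\<^sup>2) \<in> borel_measurable M"
      unfolding Lm using mM by measurable
    show "AE \<omega> in M. norm ((Max ((\<lambda>i. \<bar>\<Sum>k=1..i. X (int k) \<omega>\<bar>) ` {1..n}))\<^sup>2) \<le> norm (?G \<omega>)"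
      using pw by (intro AE_I2) (smt (verit) real_norm_def zero_le_power2)
  qed
  have "(\<integral>x. (Max ((\<lambda>i. \<bar>\<Sum>k=1..i. X (int k) x\<bar>) ` {1..n}))\<^sup>2 \<partial>M) \<le> (\<integral>\<omega>. ?G \<omega> \<partial>M)"
    by (rule integral_mono[OF iL iG pw])
  also have "\<dots> = (\<integral>\<omega>. 4 * (\<Sum>k=1..n. (X (int k) \<omega>)\<^sup>2) \<partial>M) + (\<integral>\<omega>. (\<Sum>k=1..n-1. Y k \<omega> * R k \<omega>) \<partial>M)"
    by (rule Bochner_Integration.integral_add[OF iG1 iG2])
  also have "\<dots> = 4 * (\<Sum>k=1..n. \<integral>x. (X (int k) x)\<^sup>2 \<partial>M) + (\<Sum>k=1..n-1. \<integral>\<omega>. Y k \<omega> * R k \<omega> \<partial>M)"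
    using assms(5) intYR by (simp add: Bochner_Integration.integral_sum)
  also have "\<dots> \<le> 4 * (\<Sum>k=1..n. \<integral>x. (X (int k) x)\<^sup>2 \<partial>M)
      + (\<Sum>k=1..n-1. 12 * (\<integral>\<omega>. \<bar>X (int k) \<omega> * real_cond_exp M (F (int k)) (R k) \<omega>\<bar> \<partial>M))"
    using perk by (intro add_left_mono sum_mono) auto
  also have "\<dots> = 4 * (\<Sum>k=1..n. \<integral>x. (X (int k) x)\<^sup>2 \<partial>M)
           + 12 * (\<Sum>k=1..n-1. \<integral>x. \<bar>X (int k) x *
                 real_cond_exp M (F (int k)) (\<lambda>y. \<Sum>j=k+1..n. X (int j) y) x\<bar> \<partial>M)"
    by (simp add: sum_distrib_left R_def)
  finally show ?thesis .
qed

end
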